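(* Let $\nabla$ be a compatible connection on $\mathfrak{H}_n^\infty$, with $\nabla_k=D_k+\pi(h_k)$ for skew-adjoint $h_k\in\mathbb{M}_n(\mathcal{A}_\theta^\infty)$, and let $H=-\sum_k(D_k+\pi(h_k))^2$ with domain $\mathcal{D}(\Delta)$. If $\xi\in\mathcal{D}(H)$ satisfies $H\xi=\lambda\xi$ for some $\lambda$, then $\xi\in\mathcal{D}^\infty(\Delta):=\bigcap_{m\ge1}\mathcal{D}(\Delta^m)$.
   Context: $\theta$ is a real antisymmetric $N\times N$ matrix; $\mathcal{A}_\theta$ is the universal $C^*$-algebra generated by unitaries $u_1,\dots,u_N$ with $u_ku_l=\exp(2\pi i\theta_{kl})u_lu_k$; $\mathcal{A}_\theta^\infty$ is its smooth part for the torus action $\sigma_z(u^\alpha)=z^\alpha u^\alpha$, with derivations $\delta_ku_l=i\delta_{kl}u_l$ acting entrywise on matrices as $\delta_k^{(n)}$. $\mathfrak{H}_n=L^2(\mathcal{A}_\theta\otimes\mathbb{M}_n(\mathbb{C}),\tau\otimes\mathrm{tr})\cong L^2(\mathbb{T}^N)\otimes\mathbb{M}_n(\mathbb{C})$; $\eta$ canonical embedding, $\mathfrak{H}_n^\infty=\eta(\mathbb{M}_n(\mathcal{A}_\theta^\infty))$, $D_k$ the partial derivatives ($D_k\eta(x)=\eta(\delta_k^{(n)}x)$) on their usual domains, $\pi(a)\eta(x)=\eta(ax)$. $\Delta=-\sum_kD_k^2$ with $\mathcal{D}(\Delta)=\operatorname{span}\{\eta(\sum_\alpha c_\alpha u^\alpha\otimes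 m):(\|\alpha\|_2^2c_\alpha)_\alpha\in\ell^2(\mathbb{Z}^N)\}$. A compatible connection on $\mathfrak{H}_n^\infty$ is an $N$-tuple of linear maps $\nabla_k$ with $\nabla_k(\xi a)=(\nabla_k\xi)a+\xi\delta_k^{(n)}(a)$ and $(\nabla_kx)^*y+x^*\nabla_ky=\delta_k^{(n)}(x^*y)$. *)

theory Defs
  imports "HOL-Analysis.Analysis" "HOL-Library.Function_Algebras"
begin

text \<open>An element of
  \<open>L^2(A_theta \<otimes> M_n(C))\<close> is represented by its coefficient function
  \<open>\<alpha> \<mapsto> c_\<alpha>\<close> on \<open>Z^N\<close> (here \<open>'i \<Rightarrow> int\<close>, with \<open>'i\<close> a finite linearly
  ordered index type of size N), valued in n x n complex matrices
  (\<open>complex^'m^'m\<close>, whose norm is the Hilbert-Schmidt norm), meaning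
  \<open>\<Sum>\<^sub>\<alpha> c_\<alpha> \<otimes> u^\<alpha>\<close> with \<open>u^\<alpha> = u_1^{\<alpha>_1} \<dots> u_N^{\<alpha>_N}\<close>.\<close>

type_synonym ('i,'m) coeff = "('i \<Rightarrow> int) \<Rightarrow> complex^'m^'m"

definition sqn :: "('i::finite \<Rightarrow> int) \<Rightarrow> real" where
  "sqn \<alpha> = (\<Sum>k\<in>UNIV. (real_of_int (\<alpha> k))^2)"

text \<open>\<open>u^\<beta> u^\<gamma> = phase \<theta> \<beta> \<gamma> \<cdot> u^(\<beta>+\<gamma>)\<close>.\<close>
definition phase :: "('i::{finite,linorder} \<Rightarrow> 'i \<Rightarrow> real) \<Rightarrow> ('i \<Rightarrow> int) \<Rightarrow> ('i \<Rightarrow> int) \<Rightarrow> complex" where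
  "phase \<theta> \<beta> \<gamma> = exp (2 * complex_of_real pi * \<i> *
      complex_of_real (\<Sum>k\<in>UNIV. \<Sum>l\<in>{l. l < k}. \<theta> k l * real_of_int (\<beta> k) * real_of_int (\<gamma> l)))"

definition cmul :: "complex \<Rightarrow> complex^'m^'m \<Rightarrow> complex^'m^'m" where
  "cmul c A = (\<chi> i j. c * A$i$j)"

definition madj :: "complex^'m^'m \<Rightarrow> complex^'m^'m" where
  "madj A = (\<chi> i j. cnj (A$j$i))"

text \<open>Product in \<open>M_n(A_theta)\<close> (and its extension to \<open>\<pi>(a)\<xi>\<close>, \<open>\<xi> a\<close>).\<close>
definition tw :: "('i::{finite,linorder} \<Rightarrow> 'i \<Rightarrow> real) \<Rightarrow> ('i,'m::finite) coeff \<Rightarrow> ('i,'m) coeff \<Rightarrow> ('i,'m) coeff" where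
  "tw \<theta> a b = (\<lambda>\<alpha>. \<Sum>\<^sub>\<infinity>\<beta>. cmul (phase \<theta> \<beta> (\<alpha> - \<beta>)) (a \<beta> ** b (\<alpha> - \<beta>)))"

text \<open>Involution: \<open>(u^\<alpha>)^* = phase \<theta> \<alpha> \<alpha> \<cdot> u^(-\<alpha>)\<close>.\<close>
definition star :: "('i::{finite,linorder} \<Rightarrow> 'i \<Rightarrow> real) \<Rightarrow> ('i,'m::finite) coeff \<Rightarrow> ('i,'m) coeff" where
  "star \<theta> a = (\<lambda>\<beta>. cmul (phase \<theta> \<beta> \<beta>) (madj (a (- \<beta>))))"

text \<open>Partial derivatives \<open>D_k\<close> / derivations \<open>\<delta>_k^{(n)}\<close>: \<open>\<delta>_k u^\<alpha> = i \<alpha>_k u^\<alpha>\<close>.\<close>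
definition Dk :: "'i \<Rightarrow> ('i,'m::finite) coeff \<Rightarrow> ('i,'m) coeff" where
  "Dk k \<xi> = (\<lambda>\<alpha>. cmul (\<i> * of_int (\<alpha> k)) (\<xi> \<alpha>))"

definition ell2 :: "('i,'m::finite) coeff \<Rightarrow> bool" where
  "ell2 \<xi> \<longleftrightarrow> (\<lambda>\<alpha>. (norm (\<xi> \<alpha>))^2) summable_on UNIV"

text \<open>Smooth elements (for the torus action) = rapidly decaying coefficients.\<close>
definition smooth :: "('i::finite,'m::finite) coeff \<Rightarrow> bool" where
  "smooth a \<longleftrightarrow> (\<forall>p::nat. \<exists>C. \<forall>\<alpha>. (1 + sqn \<alpha>)^p * norm (a \<alpha>) \<le> C)"

definition Delta :: "('i::finite,'m::finite) coeff \<Rightarrow> ('i,'m) coeff" where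
  "Delta \<xi> = (\<lambda>\<alpha>. sqn \<alpha> *\<^sub>R \<xi> \<alpha>)"

definition dom_Delta :: "('i::finite,'m::finite) coeff \<Rightarrow> bool" where
  "dom_Delta \<xi> \<longleftrightarrow> ell2 \<xi> \<and> ell2 (Delta \<xi>)"

fun dom_Delta_pow :: "nat \<Rightarrow> ('i::finite,'m::finite) coeff \<Rightarrow> bool" where
  "dom_Delta_pow 0 \<xi> = ell2 \<xi>"
| "dom_Delta_pow (Suc m) \<xi> = (dom_Delta \<xi> \<and> dom_Delta_pow m (Delta \<xi>))"

definition compatible_connection ::
  "('i::{finite,linorder} \<Rightarrow> 'i \<Rightarrow> real) \<Rightarrow> ('i \<Rightarrow> ('i,'m::finite) coeff \<Rightarrow> ('i,'m) coeff) \<Rightarrow> bool" where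
  "compatible_connection \<theta> nabla \<longleftrightarrow>
    (\<forall>k x y a (c::complex).
       smooth x \<and> smooth y \<and> smooth a \<longrightarrow>
         smooth (nabla k x)
       \<and> nabla k (x + y) = nabla k x + nabla k y
       \<and> nabla k (\<lambda>\<alpha>. cmul c (x \<alpha>)) = (\<lambda>\<alpha>. cmul c (nabla k x \<alpha>))
       \<and> nabla k (tw \<theta> x a) = tw \<theta> (nabla k x) a + tw \<theta> x (Dk k a)
       \<and> tw \<theta> (star \<theta> (nabla k x)) y + tw \<theta> (star \<theta> x) (nabla k y) = Dk k (tw \<theta> (star \<theta> x) y))"

definition conn :: "('i::{finite,linorder} \<Rightarrow> 'i \<Rightarrow> real) \<Rightarrow> ('i \<Rightarrow> ('i,'m::finite) coeff) \<Rightarrow> 'i \<Rightarrow> ('i,'m) coeff \<Rightarrow> ('i,'m) coeff" where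
  "conn \<theta> h k \<xi> = Dk k \<xi> + tw \<theta> (h k) \<xi>"

definition Hop :: "('i::{finite,linorder} \<Rightarrow> 'i \<Rightarrow> real) \<Rightarrow> ('i \<Rightarrow> ('i,'m::finite) coeff) \<Rightarrow> ('i,'m) coeff \<Rightarrow> ('i,'m) coeff" where
  "Hop \<theta> h \<xi> = - (\<Sum>k\<in>UNIV. conn \<theta> h k (conn \<theta> h k \<xi>))"

end

theory Submission
  imports Defs
begin


lemma sum_fun_apply: "(sum f A) x = (\<Sum>k\<in>A. f k x)"
  by (induction A rule: infinite_finite_induct) auto

lemma norm_vec_le_l1: "norm (x :: 'a::real_normed_vector ^ 'n::finite) \<le> (\<Sum>i\<in>UNIV. norm (x $ i))"
  unfolding norm_vec_def by (rule L2_set_le_sum) auto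

lemma norm_cmul: "norm (cmul c A) = norm c * norm (A::complex^'m::finite^'m)"
proof -
  have r: "norm (\<chi> j. c * (A$i$j)) = norm c * norm (A$i)" for i
    unfolding norm_vec_def by (simp add: L2_set_right_distrib norm_mult)
  show ?thesis
    unfolding cmul_def norm_vec_def[of "\<chi> i j. c * A$i$j"] using r
    by (simp add: L2_set_right_distrib norm_vec_def)
qed

lemma norm_matmul: fixes A B :: "complex^'m::finite^'m" shows "norm (A ** B) \<le> of_nat (CARD('m))^3 * (norm A * norm B)"
proof -
  have e: "norm ((A ** B)$i$j) \<le> of_nat (CARD('m)) * (norm A * norm B)" for i j
  proof -
    have "norm ((A ** B)$i$j) = norm (\<Sum>k\<in>UNIV. A$i$k * B$k$j)" by (simp add: matrix_matrix_mult_def)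
    also have "\<dots> \<le> (\<Sum>k\<in>UNIV. norm (A$i$k) * norm (B$k$j))" by (rule order_trans[OF norm_sum]) (simp add: norm_mult)
    also have "\<dots> \<le> (\<Sum>k\<in>(UNIV::'m set). norm A * norm B)"
      apply (rule sum_mono, rule mult_mono)
      apply (rule order_trans[OF Finite_Cartesian_Product.norm_nth_le Finite_Cartesian_Product.norm_nth_le])
      apply (rule order_trans[OF Finite_Cartesian_Product.norm_nth_le Finite_Cartesian_Product.norm_nth_le])
      by auto
    finally show ?thesis by simp
  qed
  have "norm (A ** B) \<le> (\<Sum>i\<in>UNIV. norm ((A ** B)$i))" by (rule norm_vec_le_l1)
  also have "\<dots> \<le> (\<Sum>i\<in>(UNIV::'m set). \<Sum>j\<in>(UNIV::'m set). norm ((A ** B)$i$j))"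
    by (rule sum_mono, rule norm_vec_le_l1)
  also have "\<dots> \<le> (\<Sum>i\<in>(UNIV::'m set). \<Sum>j\<in>(UNIV::'m set). of_nat (CARD('m)) * (norm A * norm B))"
    by (intro sum_mono e)
  also have "\<dots> = of_nat (CARD('m))^3 * (norm A * norm B)" by (simp add: power3_eq_cube)
  finally show ?thesis .
qed

lemma norm_phase: "norm (phase \<theta> b c) = 1"
proof -
  have "phase \<theta> b c = exp (\<i> * complex_of_real (2 * pi * (\<Sum>k\<in>UNIV. \<Sum>l\<in>{l. l < k}. \<theta> k l * real_of_int (b k) * real_of_int (c l))))"
    unfolding phase_def by (simp add: mult_ac)
  then show ?thesis by (simp add: norm_exp_i_times)
qed

definition wt :: "('i::finite \<Rightarrow> int) \<Rightarrow> real" where "wt \<alpha> = 1 + sqn \<alpha>"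

lemma sqn_nonneg: "0 \<le> sqn \<alpha>" unfolding sqn_def by (intro sum_nonneg) auto

lemma wt_ge1: "1 \<le> wt \<alpha>" using sqn_nonneg[of \<alpha>] by (simp add: wt_def)

lemma comp_le_sqn: "(real_of_int (\<alpha> k))^2 \<le> sqn \<alpha>"
  unfolding sqn_def by (rule member_le_sum) auto

definition W :: "nat \<Rightarrow> ('i::finite,'m::finite) coeff \<Rightarrow> bool" where
  "W q \<xi> \<longleftrightarrow> (\<lambda>\<alpha>. wt \<alpha> ^ q * (norm (\<xi> \<alpha>))^2) summable_on UNIV"

lemma W0: "W 0 \<xi> \<longleftrightarrow> ell2 \<xi>" by (simp add: W_def ell2_def)

lemma W_mono: assumes "W p \<xi>" "q \<le> p" shows "W q \<xi>"
  using assms(1) unfolding W_def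
proof (rule summable_on_comparison_test)
  fix \<alpha> :: "'a \<Rightarrow> int"
  have "wt \<alpha> ^ q \<le> wt \<alpha> ^ p" using wt_ge1[of \<alpha>] assms(2) by (rule power_increasing[rotated])
  then show "wt \<alpha> ^ q * (norm (\<xi> \<alpha>))^2 \<le> wt \<alpha> ^ p * (norm (\<xi> \<alpha>))^2"
    by (rule mult_right_mono) auto
  show "0 \<le> wt \<alpha> ^ q * (norm (\<xi> \<alpha>))^2" using wt_ge1[of \<alpha>] by simp
qed

lemma W_cmp: assumes "W p \<xi>" "\<And>\<alpha>. wt \<alpha> ^ q * (norm (\<eta> \<alpha>))^2 \<le> C * (wt \<alpha> ^ p * (norm (\<xi> \<alpha>))^2)"
  shows "W q \<eta>"
  unfolding W_def
proof (rule summable_on_comparison_test)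
  show "(\<lambda>\<alpha>. C * (wt \<alpha> ^ p * (norm (\<xi> \<alpha>))^2)) summable_on UNIV"
    using assms(1) unfolding W_def by (rule summable_on_cmult_right)
  show "0 \<le> wt \<alpha> ^ q * (norm (\<eta> \<alpha>))^2" for \<alpha> using wt_ge1[of \<alpha>] by simp
qed (use assms(2) in auto)

lemma W_add: assumes "W q f" "W q g" shows "W q (f + g)"
  unfolding W_def
proof (rule summable_on_comparison_test)
  show "(\<lambda>\<alpha>. 2 * (wt \<alpha> ^ q * (norm (f \<alpha>))^2) + 2 * (wt \<alpha> ^ q * (norm (g \<alpha>))^2)) summable_on UNIV"
    using assms unfolding W_def by (intro summable_on_add summable_on_cmult_right)
  fix \<alpha> :: "'a \<Rightarrow> int"
  have "(norm (f \<alpha> + g \<alpha>))^2 \<le> (norm (f \<alpha>) + norm (g \<alpha>))^2"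
    by (rule power_mono[OF norm_triangle_ineq]) auto
  also have "\<dots> \<le> 2 * (norm (f \<alpha>))^2 + 2 * (norm (g \<alpha>))^2"
    by (smt (verit, best) power2_sum sum_squares_bound)
  finally have "(norm (f \<alpha> + g \<alpha>))^2 \<le> 2 * (norm (f \<alpha>))^2 + 2 * (norm (g \<alpha>))^2" .
  then have "wt \<alpha> ^ q * (norm (f \<alpha> + g \<alpha>))^2 \<le> wt \<alpha> ^ q * (2 * (norm (f \<alpha>))^2 + 2 * (norm (g \<alpha>))^2)"
    using wt_ge1[of \<alpha>] by (intro mult_left_mono) auto
  then show "wt \<alpha> ^ q * (norm ((f + g) \<alpha>))^2 \<le> 2 * (wt \<alpha> ^ q * (norm (f \<alpha>))^2) + 2 * (wt \<alpha> ^ q * (norm (g \<alpha>))^2)"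
    by (simp add: algebra_simps)
  show "0 \<le> wt \<alpha> ^ q * (norm ((f + g) \<alpha>))^2" using wt_ge1[of \<alpha>] by simp
qed

lemma W_zero: "W q 0" unfolding W_def by simp

lemma W_sum: assumes "\<And>k. k \<in> S \<Longrightarrow> W q (F k)" shows "W q (sum F S)"
  using assms by (induction S rule: infinite_finite_induct) (auto simp: W_zero intro: W_add)

lemma W_uminus: "W q f \<Longrightarrow> W q (- f)" unfolding W_def by simp

lemma W_cmul: assumes "W q \<xi>" shows "W q (\<lambda>\<alpha>. cmul c (\<xi> \<alpha>))"
proof (rule W_cmp[OF assms, where C="(norm c)^2"])
  fix \<alpha> :: "'a \<Rightarrow> int"
  have "(norm (cmul c (\<xi> \<alpha>)))^2 = (norm c)^2 * (norm (\<xi> \<alpha>))^2"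
    by (simp add: norm_cmul power_mult_distrib)
  then show "wt \<alpha> ^ q * (norm (cmul c (\<xi> \<alpha>)))^2 \<le> (norm c)^2 * (wt \<alpha> ^ q * (norm (\<xi> \<alpha>))^2)"
    by simp
qed

lemma W_Dk: assumes "W (Suc q) \<xi>" shows "W q (Dk k \<xi>)"
proof (rule W_cmp[OF assms, where C=1])
  fix \<alpha> :: "'a \<Rightarrow> int"
  have "(norm (Dk k \<xi> \<alpha>))^2 = (real_of_int (\<alpha> k))^2 * (norm (\<xi> \<alpha>))^2"
    by (simp add: Dk_def norm_cmul norm_mult power_mult_distrib)
  also have "\<dots> \<le> wt \<alpha> * (norm (\<xi> \<alpha>))^2"
    using comp_le_sqn[of \<alpha> k] by (intro mult_right_mono) (auto simp: wt_def)
  finally show "wt \<alpha> ^ q * (norm (Dk k \<xi> \<alpha>))^2 \<le> 1 * (wt \<alpha> ^ Suc q * (norm (\<xi> \<alpha>))^2)"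
    using wt_ge1[of \<alpha>] by (simp add: mult_left_mono mult.assoc)
qed

lemma W_Delta: assumes "W (Suc (Suc q)) \<xi>" shows "W q (Delta \<xi>)"
proof (rule W_cmp[OF assms, where C=1])
  fix \<alpha> :: "'a \<Rightarrow> int"
  have "(norm (Delta \<xi> \<alpha>))^2 = (sqn \<alpha>)^2 * (norm (\<xi> \<alpha>))^2"
    using sqn_nonneg[of \<alpha>] by (simp add: Delta_def power_mult_distrib)
  also have "\<dots> \<le> (wt \<alpha>)^2 * (norm (\<xi> \<alpha>))^2"
    using sqn_nonneg[of \<alpha>] by (intro mult_right_mono power_mono) (auto simp: wt_def)
  finally show "wt \<alpha> ^ q * (norm (Delta \<xi> \<alpha>))^2 \<le> 1 * (wt \<alpha> ^ Suc (Suc q) * (norm (\<xi> \<alpha>))^2)"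
    using wt_ge1[of \<alpha>] by (simp add: mult_left_mono mult.assoc power2_eq_square)
qed

lemma W_reg: assumes "W q \<xi>" "W q (Delta \<xi>)" shows "W (Suc (Suc q)) \<xi>"
  unfolding W_def
proof (rule summable_on_comparison_test)
  show "(\<lambda>\<alpha>. 2 * (wt \<alpha> ^ q * (norm (\<xi> \<alpha>))^2) + 2 * (wt \<alpha> ^ q * (norm (Delta \<xi> \<alpha>))^2)) summable_on UNIV"
    using assms unfolding W_def by (intro summable_on_add summable_on_cmult_right)
  fix \<alpha> :: "'a \<Rightarrow> int"
  have e1: "(norm (Delta \<xi> \<alpha>))^2 = (sqn \<alpha>)^2 * (norm (\<xi> \<alpha>))^2"
    using sqn_nonneg[of \<alpha>] by (simp add: Delta_def power_mult_distrib)
  have e2: "(wt \<alpha>)^2 \<le> 2 + 2 * (sqn \<alpha>)^2"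
  proof -
    have "0 \<le> (sqn \<alpha> - 1)^2" by simp
    then show ?thesis unfolding wt_def power2_eq_square by (simp add: algebra_simps)
  qed
  have "(wt \<alpha>)^2 * (norm (\<xi> \<alpha>))^2 \<le> (2 + 2 * (sqn \<alpha>)^2) * (norm (\<xi> \<alpha>))^2"
    by (rule mult_right_mono[OF e2]) simp
  also have "\<dots> = 2 * (norm (\<xi> \<alpha>))^2 + 2 * (norm (Delta \<xi> \<alpha>))^2"
    unfolding e1 by (simp add: distrib_right)
  finally have e3: "(wt \<alpha>)^2 * (norm (\<xi> \<alpha>))^2 \<le> 2 * (norm (\<xi> \<alpha>))^2 + 2 * (norm (Delta \<xi> \<alpha>))^2" .
  have "wt \<alpha> ^ Suc (Suc q) * (norm (\<xi> \<alpha>))^2 = wt \<alpha> ^ q * ((wt \<alpha>)^2 * (norm (\<xi> \<alpha>))^2)"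
    by (simp add: power2_eq_square)
  also have "\<dots> \<le> wt \<alpha> ^ q * (2 * (norm (\<xi> \<alpha>))^2 + 2 * (norm (Delta \<xi> \<alpha>))^2)"
    using wt_ge1[of \<alpha>] by (intro mult_left_mono e3) auto
  also have "\<dots> = 2 * (wt \<alpha> ^ q * (norm (\<xi> \<alpha>))^2) + 2 * (wt \<alpha> ^ q * (norm (Delta \<xi> \<alpha>))^2)"
    by (simp add: distrib_left)
  finally show "wt \<alpha> ^ Suc (Suc q) * (norm (\<xi> \<alpha>))^2 \<le> 2 * (wt \<alpha> ^ q * (norm (\<xi> \<alpha>))^2) + 2 * (wt \<alpha> ^ q * (norm (Delta \<xi> \<alpha>))^2)" .
  show "0 \<le> wt \<alpha> ^ Suc (Suc q) * (norm (\<xi> \<alpha>))^2" using wt_ge1[of \<alpha>] by simp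
qed

lemma W_dom_pow: "W (2 * m) \<xi> \<Longrightarrow> dom_Delta_pow m \<xi>"
proof (induction m arbitrary: \<xi>)
  case 0 then show ?case by (simp add: W0)
next
  case (Suc m)
  have a: "W (Suc (Suc (2*m))) \<xi>" using Suc.prems by simp
  have b: "W 0 \<xi>" by (rule W_mono[OF a]) simp
  have c: "W (Suc (Suc 0)) \<xi>" by (rule W_mono[OF a]) simp
  have "dom_Delta \<xi>" unfolding dom_Delta_def
    using b W_Delta[OF c] by (simp add: W0)
  moreover have "dom_Delta_pow m (Delta \<xi>)" using Suc.IH W_Delta[OF a] by simp
  ultimately show ?case by simp
qed



lemma summable_int_aux: "(\<lambda>n::int. 1/(1+(real_of_int n)^2)) summable_on UNIV"
proof -
  let ?f = "\<lambda>n::int. 1/(1+(real_of_int n)^2)"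
  have s0: "summable (\<lambda>n::nat. inverse (real (Suc n) ^ 2))"
    using inverse_power_summable[of 2, where 'a=real] summable_Suc_iff[of "\<lambda>n. inverse (real n ^ 2)"]
    by simp
  have s0': "(\<lambda>n::nat. 2 * inverse (real (Suc n) ^ 2)) summable_on UNIV"
    using s0 by (subst summable_on_UNIV_nonneg_real_iff) (auto intro: summable_mult)
  have le: "?f (int n) \<le> 2 * inverse (real (Suc n) ^ 2)" for n
  proof -
    have "0 \<le> (real n - 1)^2" by simp
    then have "(real n + 1)^2 \<le> 2 * (1 + (real n)^2)" by (simp add: power2_eq_square algebra_simps)
    moreover have "0 < 1 + (real n)^2" by (intro add_pos_nonneg) auto
    ultimately show ?thesis by (simp add: field_simps pos_divide_le_eq)
  qed
  have le2: "?f (- int (Suc n)) \<le> 2 * inverse (real (Suc n) ^ 2)" for n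
  proof -
    have "?f (- int (Suc n)) = 1 / (1 + (real (Suc n))^2)" by (simp add: power2_eq_square algebra_simps)
    also have "\<dots> \<le> 1 / (real (Suc n))^2"
      by (rule divide_left_mono) (auto intro!: mult_pos_pos add_pos_nonneg)
    also have "\<dots> \<le> 2 * inverse (real (Suc n) ^ 2)" by (simp add: divide_inverse)
    finally show ?thesis .
  qed
  have s1: "(?f \<circ> int) summable_on UNIV"
    by (rule summable_on_comparison_test[OF s0']) (use le in auto)
  have s2: "(?f \<circ> (\<lambda>n. - int (Suc n))) summable_on UNIV"
    by (rule summable_on_comparison_test[OF s0']) (use le2 in auto)
  have i1: "?f summable_on range int" using s1 by (subst summable_on_reindex) (auto simp: inj_on_def)
  have i2: "?f summable_on range (\<lambda>n. - int (Suc n))" using s2 by (subst summable_on_reindex) (auto simp: inj_on_def)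
  have u: "range int \<union> range (\<lambda>n. - int (Suc n)) = UNIV"
  proof (rule set_eqI)
    fix x :: int
    show "x \<in> range int \<union> range (\<lambda>n. - int (Suc n)) \<longleftrightarrow> x \<in> UNIV"
    proof (cases "x \<ge> 0")
      case True then show ?thesis by (auto intro!: image_eqI[where x="nat x"])
    next
      case False then show ?thesis by (auto intro!: image_eqI[where x="nat (- x - 1)"])
    qed
  qed
  have "?f summable_on (range int \<union> range (\<lambda>n. - int (Suc n)))"
    by (rule summable_on_Un_disjoint[OF i1 i2]) auto
  then show ?thesis unfolding u .
qed

lemma summable_wt_pow: "(\<lambda>\<beta>::'i::finite \<Rightarrow> int. 1 / wt \<beta> ^ CARD('i)) summable_on UNIV"
proof -
  let ?g = "\<lambda>(k::'i) (n::int). 1/(1+(real_of_int n)^2)"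
  have g: "Infinite_Set_Sum.abs_summable_on (?g k) UNIV" for k
    using summable_int_aux by (subst abs_summable_equivalent[symmetric]) simp
  have "Infinite_Set_Sum.abs_summable_on (\<lambda>\<beta>. \<Prod>k\<in>UNIV. ?g k (\<beta> k)) (PiE UNIV (\<lambda>_. UNIV))"
    by (rule abs_summable_on_prod_PiE) (use g in auto)
  then have P: "(\<lambda>\<beta>::'i \<Rightarrow> int. norm (\<Prod>k\<in>UNIV. ?g k (\<beta> k))) summable_on UNIV"
    by (subst (asm) abs_summable_equivalent[symmetric]) (simp add: PiE_UNIV)
  show ?thesis
  proof (rule summable_on_comparison_test[OF P])
    fix \<beta> :: "'i \<Rightarrow> int"
    have pos: "0 < (\<Prod>k\<in>UNIV. 1+(real_of_int (\<beta> k))^2)" by (intro prod_pos) (auto intro: add_pos_nonneg)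
    have "(\<Prod>k\<in>UNIV. 1+(real_of_int (\<beta> k))^2) \<le> (\<Prod>k\<in>(UNIV::'i set). wt \<beta>)"
      by (intro prod_mono) (auto simp: wt_def intro: comp_le_sqn add_nonneg_nonneg)
    also have "\<dots> = wt \<beta> ^ CARD('i)" by simp
    finally have le: "(\<Prod>k\<in>UNIV. 1+(real_of_int (\<beta> k))^2) \<le> wt \<beta> ^ CARD('i)" .
    have "1 / wt \<beta> ^ CARD('i) \<le> 1 / (\<Prod>k\<in>UNIV. 1+(real_of_int (\<beta> k))^2)"
      by (rule divide_left_mono[OF le]) (use pos wt_ge1[of \<beta>] in auto)
    also have "\<dots> = (\<Prod>k\<in>UNIV. ?g k (\<beta> k))" by (simp add: prod_dividef)
    finally show "1 / wt \<beta> ^ CARD('i) \<le> norm (\<Prod>k\<in>UNIV. ?g k (\<beta> k))"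
      by (simp add: abs_of_nonneg prod_nonneg)
    show "0 \<le> 1 / wt \<beta> ^ CARD('i)" using wt_ge1[of \<beta>] by simp
  qed
qed

lemma smooth_l1: fixes a :: "('i::finite,'m::finite) coeff" assumes "smooth a" shows "(\<lambda>\<beta>. wt \<beta> ^ q * norm (a \<beta>)) summable_on UNIV"
proof -
  obtain C where C: "\<And>\<alpha>. (1 + sqn \<alpha>)^(q + CARD('i)) * norm (a \<alpha>) \<le> C"
    using assms unfolding smooth_def by blast
  show ?thesis
  proof (rule summable_on_comparison_test)
    show "(\<lambda>\<beta>::'i\<Rightarrow>int. C * (1 / wt \<beta> ^ CARD('i))) summable_on UNIV"
    proof -
      have "(\<lambda>\<beta>::'i\<Rightarrow>int. 1 / wt \<beta> ^ CARD('i)) summable_on UNIV" by (rule summable_wt_pow)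
      then show ?thesis by (rule summable_on_cmult_right)
    qed
    fix \<beta> :: "'i \<Rightarrow> int"
    have p: "0 < wt \<beta> ^ CARD('i)" using wt_ge1[of \<beta>] by simp
    have "wt \<beta> ^ q * norm (a \<beta>) * wt \<beta> ^ CARD('i) \<le> C"
      using C[of \<beta>] by (simp add: wt_def power_add mult_ac)
    then show "wt \<beta> ^ q * norm (a \<beta>) \<le> C * (1 / wt \<beta> ^ CARD('i))"
      using p by (simp add: field_simps)
    show "0 \<le> wt \<beta> ^ q * norm (a \<beta>)" using wt_ge1[of \<beta>] by simp
  qed
qed



lemma infsum_CS:
  fixes a g :: "'a \<Rightarrow> real"
  assumes a0: "\<And>y. 0 \<le> a y" and g0: "\<And>y. 0 \<le> g y"
    and sa: "a summable_on UNIV" and sag: "(\<lambda>y. a y * g y) summable_on UNIV"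
    and sag2: "(\<lambda>y. a y * (g y)^2) summable_on UNIV"
  shows "(\<Sum>\<^sub>\<infinity>y. a y * g y)^2 \<le> (\<Sum>\<^sub>\<infinity>y. a y) * (\<Sum>\<^sub>\<infinity>y. a y * (g y)^2)"
proof -
  define A where "A = (\<Sum>\<^sub>\<infinity>y. a y)"
  define S where "S = (\<Sum>\<^sub>\<infinity>y. a y * g y)"
  define D where "D = (\<Sum>\<^sub>\<infinity>y. a y * (g y)^2)"
  have A0: "0 \<le> A" unfolding A_def by (rule infsum_nonneg) (use a0 in auto)
  have S0: "0 \<le> S" unfolding S_def by (rule infsum_nonneg) (use a0 g0 in auto)
  have D0: "0 \<le> D" unfolding D_def by (rule infsum_nonneg) (use a0 in auto)
  have key: "2 * t * S \<le> t^2 * A + D" if t: "0 < t" for t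
  proof -
    have pt: "2 * t * (a y * g y) \<le> t^2 * a y + a y * (g y)^2" for y
    proof -
      have "0 \<le> a y * (t - g y)^2" using a0[of y] by simp
      then show ?thesis by (simp add: power2_eq_square algebra_simps)
    qed
    have "2 * t * S = (\<Sum>\<^sub>\<infinity>y. 2 * t * (a y * g y))" unfolding S_def
      by (simp add: infsum_cmult_right')
    also have "\<dots> \<le> (\<Sum>\<^sub>\<infinity>y. t^2 * a y + a y * (g y)^2)"
      by (rule infsum_mono) (use pt sag sa sag2 in \<open>auto intro!: summable_on_cmult_right summable_on_add\<close>)
    also have "\<dots> = t^2 * A + D" unfolding A_def D_def
      by (subst infsum_add) (use sa sag2 in \<open>auto intro!: summable_on_cmult_right simp: infsum_cmult_right'\<close>)
    finally show ?thesis .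
  qed
  have "S^2 \<le> A * D"
  proof (cases "S = 0")
    case True then show ?thesis using A0 D0 by simp
  next
    case False
    then have Sp: "0 < S" using S0 by simp
    show ?thesis
    proof (cases "A = 0")
      case True
      have "2 * ((D + 1) / S) * S \<le> ((D+1)/S)^2 * A + D"
        by (rule key) (use Sp D0 in auto)
      then have False using True Sp D0 by simp
      then show ?thesis ..
    next
      case False
      then have Ap: "0 < A" using A0 by simp
      have "2 * (S / A) * S \<le> (S/A)^2 * A + D" by (rule key) (use Sp Ap in auto)
      then have "2 * S^2 / A \<le> S^2 / A + D" using Ap by (simp add: power2_eq_square field_simps)
      then have "S^2 / A \<le> D" by simp
      then show ?thesis using Ap by (simp add: field_simps mult.commute)
    qed
  qed
  then show ?thesis unfolding A_def S_def D_def .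
qed

lemma bij_shift: "bij_betw (\<lambda>x::'a::ab_group_add. x - y) UNIV UNIV"
  by (rule bij_betwI[where g="\<lambda>x. x + y"]) auto

lemma young:
  fixes a g :: "'a::ab_group_add \<Rightarrow> real"
  assumes a0: "\<And>y. 0 \<le> a y" and g0: "\<And>y. 0 \<le> g y"
    and sa: "a summable_on UNIV" and gs: "(\<lambda>y. (g y)^2) summable_on UNIV"
    and gb: "\<And>y. g y \<le> B"
  shows "(\<lambda>x. (\<Sum>\<^sub>\<infinity>y. a y * g (x - y))^2) summable_on UNIV"
proof -
  have B0: "0 \<le> B" using g0[of 0] gb[of 0] by simp
  have s1: "(\<lambda>y. a y * g (x - y)) summable_on UNIV" for x
  proof (rule summable_on_comparison_test)
    show "(\<lambda>y. B * a y) summable_on UNIV" using sa by (rule summable_on_cmult_right)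
    fix y
    show "a y * g (x - y) \<le> B * a y" using mult_left_mono[OF gb[of "x-y"] a0[of y]] by (simp add: mult.commute)
  qed (use a0 g0 in auto)
  have s2: "(\<lambda>y. a y * (g (x - y))^2) summable_on UNIV" for x
  proof (rule summable_on_comparison_test)
    show "(\<lambda>y. B^2 * a y) summable_on UNIV" using sa by (rule summable_on_cmult_right)
    fix y
    have "(g (x - y))^2 \<le> B^2" using g0 gb by (intro power_mono) auto
    then show "a y * (g (x - y))^2 \<le> B^2 * a y" using a0[of y] by (simp add: mult.commute mult_left_mono)
  qed (use a0 in auto)
  define G where "G = (\<Sum>\<^sub>\<infinity>x. (g x)^2)"
  have sh: "(\<lambda>x. (g (x - y))^2) summable_on UNIV" for y
    using summable_on_reindex_bij_betw[OF bij_shift[of y], of "\<lambda>x. (g x)^2"] gs by simp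
  have shi: "(\<Sum>\<^sub>\<infinity>x. (g (x - y))^2) = G" for y
    unfolding G_def using infsum_reindex_bij_betw[OF bij_shift[of y], of "\<lambda>x. (g x)^2"] by simp
  define F where "F = (\<lambda>(y, x). a y * (g (x - y))^2)"
  have Fn: "norm (F z) = F z" for z
    using a0 unfolding F_def by (cases z) auto
  have fib: "(\<lambda>x. norm (F (y, x))) summable_on UNIV" for y
    unfolding F_def using summable_on_cmult_right[OF sh[of y], of "a y"] a0[of y] by (simp add: abs_mult)
  have fibs: "(\<Sum>\<^sub>\<infinity>x. norm (F (y, x))) = a y * G" for y
    unfolding F_def using shi[of y] a0[of y] by (simp add: abs_mult infsum_cmult_right')
  have "(\<lambda>z. norm (F z)) summable_on (Sigma UNIV (\<lambda>_. UNIV))"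
    using Infinite_Sum.abs_summable_on_Sigma_iff[where f=F and A=UNIV and B="\<lambda>_. UNIV"] fib fibs sa
  proof -
    have G0: "0 \<le> G" unfolding G_def by (rule infsum_nonneg) simp
    have "(\<lambda>z. a z * G) summable_on UNIV" using sa by (rule summable_on_cmult_left)
    then have "(\<lambda>z. \<bar>a z * G\<bar>) summable_on UNIV" using a0 G0 by (simp add: abs_mult)
    then show ?thesis
      using Infinite_Sum.abs_summable_on_Sigma_iff[where f=F and A=UNIV and B="\<lambda>_. UNIV"] fib fibs by simp
  qed
  then have "(\<lambda>(x, y). norm (F (y, x))) summable_on (UNIV \<times> UNIV)"
    using summable_on_swap[where f="\<lambda>z. norm (F z)" and A=UNIV and B=UNIV] by simp
  then have P: "(\<lambda>z. norm ((\<lambda>(x, y). F (y, x)) z)) summable_on (Sigma UNIV (\<lambda>_. UNIV))"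
    by (simp add: case_prod_unfold)
  have "(\<lambda>x. \<Sum>\<^sub>\<infinity>y. norm ((\<lambda>(x, y). F (y, x)) (x, y))) summable_on UNIV"
  proof -
    have nn: "\<bar>\<Sum>\<^sub>\<infinity>y. \<bar>F (y, x)\<bar>\<bar> = (\<Sum>\<^sub>\<infinity>y. \<bar>F (y, x)\<bar>)" for x
      by (simp add: infsum_nonneg)
    show ?thesis using P
      Infinite_Sum.abs_summable_on_Sigma_iff[where f="\<lambda>(x, y). F (y, x)" and A=UNIV and B="\<lambda>_. UNIV"] by (simp add: nn)
  qed
  then have dsum: "(\<lambda>x. \<Sum>\<^sub>\<infinity>y. a y * (g (x - y))^2) summable_on UNIV"
    using a0 by (simp add: F_def abs_mult)
  show ?thesis
  proof (rule summable_on_comparison_test)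
    show "(\<lambda>x. (\<Sum>\<^sub>\<infinity>y. a y) * (\<Sum>\<^sub>\<infinity>y. a y * (g (x - y))^2)) summable_on UNIV"
      using dsum by (rule summable_on_cmult_right)
    fix x
    show "(\<Sum>\<^sub>\<infinity>y. a y * g (x - y))^2 \<le> (\<Sum>\<^sub>\<infinity>y. a y) * (\<Sum>\<^sub>\<infinity>y. a y * (g (x - y))^2)"
      by (rule infsum_CS[where g="\<lambda>y. g (x - y)"]) (use a0 g0 sa s1 s2 in auto)
  qed auto
qed



lemma sqn_diff: "sqn (\<alpha> - \<beta>) = (\<Sum>k\<in>UNIV. (real_of_int (\<alpha> k) - real_of_int (\<beta> k))^2)"
  unfolding sqn_def by (simp add: fun_diff_def)

lemma peetre_wt: "wt \<alpha> \<le> 2 * wt \<beta> * wt (\<alpha> - \<beta>)"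
proof -
  have "sqn \<alpha> \<le> 2 * sqn \<beta> + 2 * sqn (\<alpha> - \<beta>)"
  proof -
    have "(real_of_int (\<alpha> k))^2 \<le> 2 * (real_of_int (\<beta> k))^2 + 2 * (real_of_int (\<alpha> k) - real_of_int (\<beta> k))^2" for k
    proof -
      have "0 \<le> (2 * real_of_int (\<beta> k) - real_of_int (\<alpha> k))^2" by simp
      then show ?thesis by (simp add: power2_eq_square algebra_simps)
    qed
    then have "sqn \<alpha> \<le> (\<Sum>k\<in>UNIV. 2 * (real_of_int (\<beta> k))^2 + 2 * (real_of_int (\<alpha> k) - real_of_int (\<beta> k))^2)"
      unfolding sqn_def by (intro sum_mono) auto
    also have "\<dots> = 2 * sqn \<beta> + 2 * sqn (\<alpha> - \<beta>)"
      unfolding sqn_diff by (simp add: sqn_def sum.distrib sum_distrib_left)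
    finally show ?thesis .
  qed
  moreover have "0 \<le> sqn \<beta> * sqn (\<alpha> - \<beta>)" using sqn_nonneg[of \<beta>] sqn_nonneg[of "\<alpha> - \<beta>"] by simp
  ultimately show ?thesis unfolding wt_def by (simp add: algebra_simps)
qed

definition rw :: "nat \<Rightarrow> ('i::finite \<Rightarrow> int) \<Rightarrow> real" where "rw q \<alpha> = sqrt (wt \<alpha>) ^ q"

lemma rw_ge1: "1 \<le> rw q \<alpha>" unfolding rw_def using wt_ge1[of \<alpha>] by (simp add: one_le_power)

lemma rw_sq: "(rw q \<alpha>)^2 = wt \<alpha> ^ q"
proof -
  have "(sqrt (wt \<alpha>) ^ q)^2 = (sqrt (wt \<alpha>) ^ 2)^q" by (metis power_mult mult.commute)
  then show ?thesis unfolding rw_def using wt_ge1[of \<alpha>] by simp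
qed

lemma rw_le: "rw q \<alpha> \<le> wt \<alpha> ^ q"
proof -
  have "sqrt (wt \<alpha>) \<le> wt \<alpha>" using wt_ge1[of \<alpha>] by (simp add: real_sqrt_le_iff' power2_eq_square) 
  then show ?thesis unfolding rw_def using wt_ge1[of \<alpha>] by (intro power_mono) auto
qed

lemma peetre_rw: "rw q \<alpha> \<le> sqrt 2 ^ q * rw q \<beta> * rw q (\<alpha> - \<beta>)"
proof -
  have "sqrt (wt \<alpha>) \<le> sqrt 2 * sqrt (wt \<beta>) * sqrt (wt (\<alpha> - \<beta>))"
    using peetre_wt[of \<alpha> \<beta>] by (simp add: real_sqrt_mult[symmetric])
  then have "sqrt (wt \<alpha>) ^ q \<le> (sqrt 2 * sqrt (wt \<beta>) * sqrt (wt (\<alpha> - \<beta>))) ^ q"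
    using wt_ge1[of \<alpha>] by (intro power_mono) auto
  then show ?thesis unfolding rw_def by (simp add: power_mult_distrib)
qed

lemma W_tw:
  fixes a \<xi> :: "('i::{finite,linorder},'m::finite) coeff"
  assumes sm: "smooth a" and W: "W q \<xi>"
  shows "W q (tw \<theta> a \<xi>)"
proof -
  define K :: real where "K = of_nat (CARD('m))^3"
  have K0: "0 \<le> K" unfolding K_def by simp
  define g where "g \<gamma> = rw q \<gamma> * norm (\<xi> \<gamma>)" for \<gamma>
  have g0: "0 \<le> g \<gamma>" for \<gamma> unfolding g_def using rw_ge1[of q \<gamma>] by simp
  have g2: "(g \<gamma>)^2 = wt \<gamma> ^ q * (norm (\<xi> \<gamma>))^2" for \<gamma>
    unfolding g_def by (simp add: power_mult_distrib rw_sq)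
  have gs: "(\<lambda>\<gamma>. (g \<gamma>)^2) summable_on UNIV" using W unfolding W_def g2 .
  define GG where "GG = (\<Sum>\<^sub>\<infinity>\<gamma>. (g \<gamma>)^2)"
  have gb: "g \<gamma> \<le> sqrt GG" for \<gamma>
  proof -
    have "sum (\<lambda>\<gamma>. (g \<gamma>)^2) {\<gamma>} \<le> GG" unfolding GG_def
      by (rule finite_sum_le_infsum[OF gs]) auto
    then have "(g \<gamma>)^2 \<le> GG" by simp
    then show ?thesis using g0[of \<gamma>] by (simp add: real_le_rsqrt)
  qed
  have xib: "norm (\<xi> \<gamma>) \<le> g \<gamma>" for \<gamma>
    unfolding g_def using rw_ge1[of q \<gamma>] by (simp add: mult_le_cancel_right1)
  define A where "A \<beta> = K * sqrt 2 ^ q * rw q \<beta> * norm (a \<beta>)" for \<beta>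
  have A0: "0 \<le> A \<beta>" for \<beta> unfolding A_def using K0 rw_ge1[of q \<beta>] by simp
  have As: "A summable_on UNIV"
  proof (rule summable_on_comparison_test)
    show "(\<lambda>\<beta>. K * sqrt 2 ^ q * (wt \<beta> ^ q * norm (a \<beta>))) summable_on UNIV"
      by (rule summable_on_cmult_right[OF smooth_l1[OF sm]])
    fix \<beta>
    have "rw q \<beta> * norm (a \<beta>) \<le> wt \<beta> ^ q * norm (a \<beta>)" by (rule mult_right_mono[OF rw_le]) simp
    then show "A \<beta> \<le> K * sqrt 2 ^ q * (wt \<beta> ^ q * norm (a \<beta>))"
      unfolding A_def using K0 by (simp add: mult.assoc mult_left_mono)
  qed (use A0 in auto)
  have Y: "(\<lambda>\<alpha>. (\<Sum>\<^sub>\<infinity>\<beta>. A \<beta> * g (\<alpha> - \<beta>))^2) summable_on UNIV"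
    by (rule young[OF A0 g0 As gs gb])
  have na: "(\<lambda>\<beta>. norm (a \<beta>)) summable_on UNIV" using smooth_l1[OF sm, of 0] by simp
  have pt: "wt \<alpha> ^ q * (norm (tw \<theta> a \<xi> \<alpha>))^2 \<le> (\<Sum>\<^sub>\<infinity>\<beta>. A \<beta> * g (\<alpha> - \<beta>))^2" for \<alpha>
  proof -
    define T where "T \<beta> = cmul (phase \<theta> \<beta> (\<alpha> - \<beta>)) (a \<beta> ** \<xi> (\<alpha> - \<beta>))" for \<beta>
    define b where "b \<beta> = K * (norm (a \<beta>) * norm (\<xi> (\<alpha> - \<beta>)))" for \<beta>
    have Tb: "norm (T \<beta>) \<le> b \<beta>" for \<beta>
      unfolding T_def b_def K_def by (simp add: norm_cmul norm_phase norm_matmul)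
    have bs: "b summable_on UNIV"
    proof (rule summable_on_comparison_test)
      show "(\<lambda>\<beta>. (K * sqrt GG) * norm (a \<beta>)) summable_on UNIV" by (rule summable_on_cmult_right[OF na])
      fix \<beta>
      have "norm (\<xi> (\<alpha> - \<beta>)) \<le> sqrt GG" using xib gb order_trans by blast
      then have "norm (a \<beta>) * norm (\<xi> (\<alpha> - \<beta>)) \<le> norm (a \<beta>) * sqrt GG" by (simp add: mult_left_mono)
      then show "b \<beta> \<le> (K * sqrt GG) * norm (a \<beta>)" unfolding b_def using K0
        by (simp add: mult_left_mono mult_ac)
      show "0 \<le> b \<beta>" unfolding b_def using K0 by simp
    qed
    have Ts: "(\<lambda>\<beta>. norm (T \<beta>)) summable_on UNIV"
      by (rule Infinite_Sum.abs_summable_on_comparison_test'[OF bs Tb])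
    have "norm (tw \<theta> a \<xi> \<alpha>) = norm (\<Sum>\<^sub>\<infinity>\<beta>. T \<beta>)" unfolding tw_def T_def by simp
    also have "\<dots> \<le> (\<Sum>\<^sub>\<infinity>\<beta>. norm (T \<beta>))" by (rule norm_infsum_bound[OF Ts])
    also have "\<dots> \<le> (\<Sum>\<^sub>\<infinity>\<beta>. b \<beta>)" by (rule infsum_mono[OF Ts bs Tb])
    finally have n1: "norm (tw \<theta> a \<xi> \<alpha>) \<le> (\<Sum>\<^sub>\<infinity>\<beta>. b \<beta>)" .
    have Ags: "(\<lambda>\<beta>. A \<beta> * g (\<alpha> - \<beta>)) summable_on UNIV"
    proof (rule summable_on_comparison_test)
      show "(\<lambda>\<beta>. sqrt GG * A \<beta>) summable_on UNIV" by (rule summable_on_cmult_right[OF As])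
      fix \<beta>
      show "A \<beta> * g (\<alpha> - \<beta>) \<le> sqrt GG * A \<beta>" using mult_left_mono[OF gb A0] by (simp add: mult.commute)
      show "0 \<le> A \<beta> * g (\<alpha> - \<beta>)" using A0 g0 by simp
    qed
    have le: "rw q \<alpha> * b \<beta> \<le> A \<beta> * g (\<alpha> - \<beta>)" for \<beta>
    proof -
      have "rw q \<alpha> * b \<beta> = K * norm (a \<beta>) * norm (\<xi> (\<alpha> - \<beta>)) * rw q \<alpha>" unfolding b_def by (simp add: mult_ac)
      also have "\<dots> \<le> K * norm (a \<beta>) * norm (\<xi> (\<alpha> - \<beta>)) * (sqrt 2 ^ q * rw q \<beta> * rw q (\<alpha> - \<beta>))"
        by (rule mult_left_mono[OF peetre_rw]) (use K0 in simp)
      also have "\<dots> = A \<beta> * g (\<alpha> - \<beta>)" unfolding A_def g_def by (simp add: mult_ac)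
      finally show ?thesis .
    qed
    have "rw q \<alpha> * norm (tw \<theta> a \<xi> \<alpha>) \<le> rw q \<alpha> * (\<Sum>\<^sub>\<infinity>\<beta>. b \<beta>)"
      using rw_ge1[of q \<alpha>] n1 by (simp add: mult_left_mono)
    also have "\<dots> = (\<Sum>\<^sub>\<infinity>\<beta>. rw q \<alpha> * b \<beta>)" by (simp add: infsum_cmult_right')
    also have "\<dots> \<le> (\<Sum>\<^sub>\<infinity>\<beta>. A \<beta> * g (\<alpha> - \<beta>))"
      by (rule infsum_mono[OF summable_on_cmult_right[OF bs] Ags le])
    finally have n2: "rw q \<alpha> * norm (tw \<theta> a \<xi> \<alpha>) \<le> (\<Sum>\<^sub>\<infinity>\<beta>. A \<beta> * g (\<alpha> - \<beta>))" .
    have "wt \<alpha> ^ q * (norm (tw \<theta> a \<xi> \<alpha>))^2 = (rw q \<alpha> * norm (tw \<theta> a \<xi> \<alpha>))^2"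
      by (simp add: power_mult_distrib rw_sq)
    also have "\<dots> \<le> (\<Sum>\<^sub>\<infinity>\<beta>. A \<beta> * g (\<alpha> - \<beta>))^2"
      by (rule power_mono[OF n2]) (use rw_ge1[of q \<alpha>] in simp)
    finally show ?thesis .
  qed
  show ?thesis unfolding W_def
  proof (rule summable_on_comparison_test[OF Y pt])
    fix \<alpha> :: "'i \<Rightarrow> int"
    show "0 \<le> wt \<alpha> ^ q * (norm (tw \<theta> a \<xi> \<alpha>))^2" using wt_ge1[of \<alpha>] by simp
  qed
qed



lemma cmul_add: "cmul c (x + y) = cmul c x + cmul c y"
  by (simp add: cmul_def vec_eq_iff algebra_simps)

lemma cmul_cmul: "cmul c (cmul d x) = cmul (c * d) x"
  by (simp add: cmul_def vec_eq_iff mult.assoc)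

lemma sum_cmul: "(\<Sum>k\<in>S. cmul (c k) x) = cmul (\<Sum>k\<in>S. c k) x"
  by (induction S rule: infinite_finite_induct) (auto simp: cmul_def vec_eq_iff algebra_simps)

lemma cmul_of_real: "cmul (complex_of_real r) x = r *\<^sub>R x"
  apply (simp add: cmul_def vec_eq_iff)
  apply (simp add: scaleR_conv_of_real)
  done

lemma cmul_neg: "cmul (- c) x = - cmul c x"
  by (simp add: cmul_def vec_eq_iff)

lemma Delta_eq:
  fixes \<xi> :: "('i::{finite,linorder},'m::finite) coeff"
    and h :: "'i \<Rightarrow> ('i,'m) coeff" and \<theta> :: "'i \<Rightarrow> 'i \<Rightarrow> real"
  defines "R \<equiv> (\<Sum>k\<in>UNIV. Dk k (tw \<theta> (h k) \<xi>) + tw \<theta> (h k) (conn \<theta> h k \<xi>))"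
  shows "Delta \<xi> = Hop \<theta> h \<xi> + R"
proof (rule ext)
  fix \<alpha> :: "'i \<Rightarrow> int"
  have cc: "conn \<theta> h k (conn \<theta> h k \<xi>) \<alpha> = cmul (- complex_of_real ((real_of_int (\<alpha> k))^2)) (\<xi> \<alpha>)
      + (Dk k (tw \<theta> (h k) \<xi>) + tw \<theta> (h k) (conn \<theta> h k \<xi>)) \<alpha>" for k
  proof -
    have "(\<i> * of_int (\<alpha> k)) * (\<i> * of_int (\<alpha> k)) = - complex_of_real ((real_of_int (\<alpha> k))^2)"
      by (simp add: power2_eq_square algebra_simps)
    then show ?thesis
      by (simp add: conn_def Dk_def cmul_add cmul_cmul)
  qed
  have s: "(\<Sum>k\<in>UNIV. cmul (- complex_of_real ((real_of_int (\<alpha> k))^2)) (\<xi> \<alpha>)) = - Delta \<xi> \<alpha>"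
  proof -
    have "(\<Sum>k\<in>UNIV. cmul (- complex_of_real ((real_of_int (\<alpha> k))^2)) (\<xi> \<alpha>))
        = cmul (complex_of_real (- sqn \<alpha>)) (\<xi> \<alpha>)"
      by (simp add: sum_cmul sqn_def sum_negf)
    also have "\<dots> = - Delta \<xi> \<alpha>" by (simp add: cmul_neg cmul_of_real Delta_def)
    finally show ?thesis .
  qed
  have "Hop \<theta> h \<xi> \<alpha> = - (\<Sum>k\<in>UNIV. conn \<theta> h k (conn \<theta> h k \<xi>) \<alpha>)"
    by (simp add: Hop_def sum_fun_apply)
  also have "\<dots> = Delta \<xi> \<alpha> - R \<alpha>"
    unfolding cc sum.distrib s R_def sum_fun_apply by (simp add: sum.distrib)
  finally show "Delta \<xi> \<alpha> = (Hop \<theta> h \<xi> + R) \<alpha>" by simp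
qed

theorem mainTheorem8:
  fixes \<theta> :: "'i::{finite,linorder} \<Rightarrow> 'i \<Rightarrow> real"
    and h :: "'i \<Rightarrow> ('i,'m::finite) coeff"
    and nabla :: "'i \<Rightarrow> ('i,'m) coeff \<Rightarrow> ('i,'m) coeff"
    and \<xi> :: "('i,'m) coeff"
    and lam :: complex
  assumes "\<forall>k l. \<theta> k l = - \<theta> l k"
    and "\<forall>k. smooth (h k)"
    and "\<forall>k. star \<theta> (h k) = - h k"
    and "compatible_connection \<theta> nabla"
    and "\<forall>k x. smooth x \<longrightarrow> nabla k x = Dk k x + tw \<theta> (h k) x"
    and "dom_Delta \<xi>"
    and "Hop \<theta> h \<xi> = (\<lambda>\<alpha>. cmul lam (\<xi> \<alpha>))"
  shows "\<forall>m\<ge>1. dom_Delta_pow m \<xi>"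
proof -
  have hs: "smooth (h k)" for k using assms(2) by simp
  have W0x: "W 0 \<xi>" and W0D: "W 0 (Delta \<xi>)" using assms(6) by (simp_all add: dom_Delta_def W0)
  have W2: "W (Suc (Suc 0)) \<xi>" by (rule W_reg[OF W0x W0D])
  have step: "W (Suc (Suc q)) \<xi>" if Wq: "W (Suc q) \<xi>" for q
  proof -
    have Wq0: "W q \<xi>" by (rule W_mono[OF Wq]) simp
    have T1: "W (Suc q) (tw \<theta> (h k) \<xi>)" for k by (rule W_tw[OF hs Wq])
    have C: "W q (conn \<theta> h k \<xi>)" for k
      unfolding conn_def by (rule W_add[OF W_Dk[OF Wq] W_mono[OF T1]]) simp
    have R: "W q (\<Sum>k\<in>UNIV. Dk k (tw \<theta> (h k) \<xi>) + tw \<theta> (h k) (conn \<theta> h k \<xi>))"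
      by (rule W_sum, rule W_add[OF W_Dk[OF T1] W_tw[OF hs C]])
    have H: "W q (Hop \<theta> h \<xi>)" unfolding assms(7) by (rule W_cmul[OF Wq0])
    have "W q (Delta \<xi>)" unfolding Delta_eq[of \<xi> \<theta> h] by (rule W_add[OF H R])
    then show ?thesis by (rule W_reg[OF Wq0])
  qed
  have all: "W (Suc q) \<xi>" for q
  proof (induction q)
    case 0 show ?case by (rule W_mono[OF W2]) simp
  next
    case (Suc q) show ?case by (rule step[OF Suc.IH])
  qed
  show ?thesis
  proof (intro allI impI)
    fix m :: nat assume "1 \<le> m"
    then have "2 * m = Suc (2 * m - 1)" by simp
    then have "W (2 * m) \<xi>" using all[of "2 * m - 1"] by simp
    then show "dom_Delta_pow m \<xi>" by (rule W_dom_pow)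
  qed
qed


end
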